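(* Let $n$ be a positive integer and let $\mathcal{B}$ be a balanced bipartite graph on $2n$ vertices with parts $V_1$ and $V_2$ such that $\delta(\mathcal{B})\geq\frac{n}{2}+1$. If $S\subseteq V(\mathcal{B})$ satisfies $|S|=n+1$ and $\mathcal{B}[S]$ is a forest, then $\min\{|S\cap V_1|,|S\cap V_2|\}\in\{1,2,\frac{n}{2}\}$.
   Context: All graphs are finite and simple. A balanced bipartite graph on $2n$ vertices is a bipartite graph with a given bipartition $(V_1,V_2)$ where $|V_1|=|V_2|=n$. $\delta(G)$ denotes the minimum degree of $G$, and $G[S]$ the subgraph induced by $S\subseteq V(G)$. *)

theory Defs
  imports Complex_Main
begin

text \<open>A simple graph is given by a finite vertex set V and a symmetric irreflexive
  adjacency relation E (only its restriction to V matters).\<close>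

definition simple_graph :: "'a set \<Rightarrow> ('a \<Rightarrow> 'a \<Rightarrow> bool) \<Rightarrow> bool" where
  "simple_graph V E \<longleftrightarrow> finite V \<and> (\<forall>x y. E x y \<longrightarrow> E y x) \<and> (\<forall>x. \<not> E x x)"

definition balanced_bipartite :: "'a set \<Rightarrow> 'a set \<Rightarrow> ('a \<Rightarrow> 'a \<Rightarrow> bool) \<Rightarrow> nat \<Rightarrow> bool" where
  "balanced_bipartite V1 V2 E n \<longleftrightarrow>
     simple_graph (V1 \<union> V2) E \<and> V1 \<inter> V2 = {} \<and> card V1 = n \<and> card V2 = n \<and>
     (\<forall>x\<in>V1 \<union> V2. \<forall>y\<in>V1 \<union> V2. E x y \<longrightarrow> (x \<in> V1 \<and> y \<in> V2) \<or> (x \<in> V2 \<and> y \<in> V1))"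

definition degree :: "'a set \<Rightarrow> ('a \<Rightarrow> 'a \<Rightarrow> bool) \<Rightarrow> 'a \<Rightarrow> nat" where
  "degree V E v = card {u \<in> V. E v u}"

definition min_degree :: "'a set \<Rightarrow> ('a \<Rightarrow> 'a \<Rightarrow> bool) \<Rightarrow> nat" where
  "min_degree V E = Min (degree V E ` V)"

definition is_cycle :: "'a set \<Rightarrow> ('a \<Rightarrow> 'a \<Rightarrow> bool) \<Rightarrow> 'a list \<Rightarrow> bool" where
  "is_cycle V E cs \<longleftrightarrow> length cs \<ge> 3 \<and> distinct cs \<and> set cs \<subseteq> V \<and>
     (\<forall>i < length cs - 1. E (cs ! i) (cs ! (i + 1))) \<and> E (last cs) (hd cs)"

text \<open>The induced subgraph G[S] is a forest: it has no cycle. (Cycles of G[S] are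
  exactly cycles of G all of whose vertices lie in S.)\<close>
definition induced_forest :: "'a set \<Rightarrow> ('a \<Rightarrow> 'a \<Rightarrow> bool) \<Rightarrow> 'a set \<Rightarrow> bool" where
  "induced_forest V E S \<longleftrightarrow> S \<subseteq> V \<and> \<not> (\<exists>cs. is_cycle S E cs)"

end

theory Submission
  imports Defs
begin

definition gpath :: "'a set \<Rightarrow> ('a \<Rightarrow> 'a \<Rightarrow> bool) \<Rightarrow> 'a list \<Rightarrow> bool" where
  "gpath T E p \<longleftrightarrow> p \<noteq> [] \<and> distinct p \<and> set p \<subseteq> T \<and>
     (\<forall>i < length p - 1. E (p ! i) (p ! Suc i))"

lemma path_cycle:
  assumes sym: "\<forall>x y. E x y \<longrightarrow> E y x" and p: "gpath T E p"
    and j: "2 \<le> j" "j < length p" and e: "E (hd p) (p ! j)"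
  shows "is_cycle T E (take (Suc j) p)"
proof -
  have "length (take (Suc j) p) = Suc j" using j by simp
  moreover have "distinct (take (Suc j) p)" using p by (simp add: gpath_def)
  moreover have "set (take (Suc j) p) \<subseteq> T" using p set_take_subset unfolding gpath_def by fast
  moreover have "\<forall>i < Suc j - 1. E (take (Suc j) p ! i) (take (Suc j) p ! (i + 1))"
    using p j unfolding gpath_def by auto
  moreover have "last (take (Suc j) p) = p ! j" using j by (subst last_conv_nth) auto
  moreover have "hd (take (Suc j) p) = hd p" using j by (cases p) auto
  ultimately show ?thesis unfolding is_cycle_def using e sym j by auto
qed

lemma deg2_cycle:
  assumes fin: "finite T" and ne: "T \<noteq> {}" and deg: "\<forall>v\<in>T. 2 \<le> card {u\<in>T. E v u}"
    and sym: "\<forall>x y. E x y \<longrightarrow> E y x" and irr: "\<forall>x. \<not> E x x"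
  shows "\<exists>cs. is_cycle T E cs"
proof (rule ccontr)
  assume nc: "\<not> (\<exists>cs. is_cycle T E cs)"
  have "\<exists>p. gpath T E p \<and> length p = Suc k" for k
  proof (induction k)
    case 0
    from ne obtain v where "v \<in> T" by auto
    hence "gpath T E [v]" by (simp add: gpath_def)
    thus ?case by force
  next
    case (Suc k)
    then obtain p where p: "gpath T E p" "length p = Suc k" by auto
    define v where "v = hd p"
    have v0: "v = p ! 0" using p by (simp add: v_def gpath_def hd_conv_nth)
    have vT: "v \<in> T" using p v0 by (auto simp: gpath_def)
    define N where "N = {u\<in>T. E v u}"
    show ?case
    proof (cases "\<exists>u\<in>N. u \<notin> set p")
      case True
      then obtain u where u: "u \<in> N" "u \<notin> set p" by auto
      have "gpath T E (u # p)"
        unfolding gpath_def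
      proof (intro conjI allI impI)
        show "distinct (u # p)" using u p by (simp add: gpath_def)
        show "set (u # p) \<subseteq> T" using u p by (auto simp: gpath_def N_def)
        fix i assume i: "i < length (u # p) - 1"
        show "E ((u # p) ! i) ((u # p) ! Suc i)"
        proof (cases i)
          case 0 thus ?thesis using u sym v0 by (auto simp: N_def)
        next
          case (Suc i') thus ?thesis using p i by (auto simp: gpath_def)
        qed
      qed simp
      thus ?thesis using p by force
    next
      case False
      hence Nsub: "N \<subseteq> set p" by auto
      have "card N \<ge> 2" using deg vT N_def by auto
      hence "\<not> N \<subseteq> {p ! 1}" using card_mono[of "{p!1}" N] by auto
      then obtain u where u: "u \<in> N" "u \<noteq> p ! 1" by auto
      then obtain j where j: "j < length p" "p ! j = u" using Nsub u(1) by (metis in_set_conv_nth subsetD)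
      have "j \<noteq> 0"
      proof
        assume "j = 0"
        hence "u = v" using j v0 by simp
        thus False using u irr by (auto simp: N_def)
      qed
      with u j have "2 \<le> j" by (cases j) (auto, case_tac nat, auto)
      hence "is_cycle T E (take (Suc j) p)"
        using path_cycle[OF sym p(1) _ j(1)] u j by (auto simp: N_def v_def)
      thus ?thesis using nc by blast
    qed
  qed
  then obtain p where p: "gpath T E p" "length p = Suc (card T)" by blast
  hence "card (set p) = Suc (card T)" by (simp add: gpath_def distinct_card)
  moreover have "card (set p) \<le> card T" using p fin by (intro card_mono) (auto simp: gpath_def)
  ultimately show False by simp
qed

lemma cycle_mono: "is_cycle T' E cs \<Longrightarrow> T' \<subseteq> T \<Longrightarrow> is_cycle T E cs"
  unfolding is_cycle_def by blast

lemma forest_edges: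
  assumes sym: "\<forall>x y. E x y \<longrightarrow> E y x" and irr: "\<forall>x. \<not> E x x"
  shows "finite T \<Longrightarrow> T \<noteq> {} \<Longrightarrow> \<not> (\<exists>cs. is_cycle T E cs) \<Longrightarrow>
    card {(x,y). x\<in>T \<and> y\<in>T \<and> E x y} + 2 \<le> 2 * card T"
proof (induction "card T" arbitrary: T rule: less_induct)
  case less
  have "\<not> (\<forall>v\<in>T. 2 \<le> card {u\<in>T. E v u})"
    using deg2_cycle[OF less.prems(1,2) _ sym irr] less.prems(3) by blast
  then obtain v where vT: "v \<in> T" and dv: "card {u\<in>T. E v u} \<le> 1"
    by (auto simp: not_le)
  define N where "N = {u\<in>T. E v u}"
  define P where "P = {(x,y). x\<in>T \<and> y\<in>T \<and> E x y}"
  show ?case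
  proof (cases "T = {v}")
    case True
    hence "P = {}" using irr by (auto simp: P_def)
    hence "card P = 0" by simp
    thus ?thesis using True unfolding P_def by simp
  next
    case False
    define T' where "T' = T - {v}"
    have T'ne: "T' \<noteq> {}" using False vT by (auto simp: T'_def)
    have ct: "card T' = card T - 1" using vT less.prems(1) by (simp add: T'_def)
    have cT1: "card T \<ge> 1" using vT less.prems(1) by (simp add: Suc_le_eq card_gt_0_iff) blast
    have "card T' < card T" using ct cT1 by linarith
    moreover have "\<not> (\<exists>cs. is_cycle T' E cs)" using less.prems(3) cycle_mono[of T' E _ T]
      by (auto simp: T'_def)
    ultimately have IH: "card {(x,y). x\<in>T' \<and> y\<in>T' \<and> E x y} + 2 \<le> 2 * card T'"
      using less.hyps[of T'] less.prems(1) T'ne by (auto simp: T'_def)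
    define P' where "P' = {(x,y). x\<in>T' \<and> y\<in>T' \<and> E x y}"
    have "P' \<subseteq> T \<times> T" unfolding P'_def T'_def by blast
    hence fP': "finite P'" using less.prems(1) by (meson finite_SigmaI finite_subset)
    have fN: "finite N" using less.prems(1) by (simp add: N_def)
    have "P \<subseteq> P' \<union> ({v} \<times> N) \<union> (N \<times> {v})"
    proof (rule subsetI)
      fix z assume "z \<in> P"
      then obtain x y where xy': "z = (x,y)" "x \<in> T" "y \<in> T" "E x y" by (auto simp: P_def)
      have "E y x" using sym xy'(4) by blast
      thus "z \<in> P' \<union> ({v} \<times> N) \<union> (N \<times> {v})"
        using xy' by (auto simp: P'_def N_def T'_def)
    qed
    hence "card P \<le> card (P' \<union> ({v} \<times> N) \<union> (N \<times> {v}))"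
      using fP' fN by (intro card_mono) auto
    also have "\<dots> \<le> card (P' \<union> ({v} \<times> N)) + card (N \<times> {v})"
      by (rule card_Un_le)
    also have "\<dots> \<le> card P' + card ({v} \<times> N) + card (N \<times> {v})"
      using card_Un_le[of P' "{v} \<times> N"] by linarith
    also have "\<dots> \<le> card P' + 2" using dv by (simp add: card_cartesian_product N_def)
    finally have "card P \<le> card P' + 2" .
    with cT1 have "card P + 2 \<le> 2 * card T" using IH ct unfolding P'_def by linarith
    thus ?thesis unfolding P_def .
  qed
qed

lemma arith1:
  fixes a b d n :: nat
  assumes ab: "a+b = n+1" and d2: "n+2 \<le> 2*d" and le: "a \<le> b" and a1: "1 \<le> a"
    and e: "a*(d+b-n) \<le> n"
  shows "a=1 \<or> a=2 \<or> 2*a = n"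
proof (rule ccontr)
  assume c: "\<not> ?thesis"
  hence a3: "a \<ge> 3" using a1 by linarith
  define c where "c = d + b - n"
  have acn: "a*c \<le> n" using e c_def by simp
  have cb: "2*c \<ge> n + 4 - 2*a" using ab d2 unfolding c_def by linarith
  show False
  proof (cases "2*a = n+1")
    case True
    hence "2*d \<ge> n+3" using d2 by presburger
    hence "c \<ge> 2" using True ab unfolding c_def by linarith
    hence "a*2 \<le> a*c" by (rule mult_le_mono2)
    thus False using acn True by linarith
  next
    case False
    hence n2a: "n \<ge> 2*a + 1" using ab le c by linarith
    have h1: "int n + 4 - 2*int a \<le> 2 * int c" using cb n2a by linarith
    have h2: "int a*(int n+4-2*int a) \<le> int a*(2*int c)"
      using h1 by (rule mult_left_mono) simp
    have h3: "1 \<le> (int a-2)*(int n-2*int a)"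
    proof -
      have "1 \<le> int a - 2" "1 \<le> int n - 2*int a" using a3 n2a by linarith+
      hence "1*1 \<le> (int a-2)*(int n-2*int a)" by (intro mult_mono) auto
      thus ?thesis by simp
    qed
    have "int a * int c > int n" using h2 h3 by (simp add: algebra_simps)
    hence "a * c > n" by (simp flip: of_nat_mult)
    thus False using acn by linarith
  qed
qed

theorem theorem2p3:
  fixes V1 V2 :: "'a set" and E :: "'a \<Rightarrow> 'a \<Rightarrow> bool" and n :: nat and S :: "'a set"
  assumes "n > 0"
    and "balanced_bipartite V1 V2 E n"
    and "real (min_degree (V1 \<union> V2) E) \<ge> real n / 2 + 1"
    and "S \<subseteq> V1 \<union> V2"
    and "card S = n + 1"
    and "induced_forest (V1 \<union> V2) E S"
  shows "real (min (card (S \<inter> V1)) (card (S \<inter> V2))) \<in> {1, 2, real n / 2}"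
proof -
  define V where "V = V1 \<union> V2"
  have sg: "simple_graph V E" and dis: "V1 \<inter> V2 = {}" and c1: "card V1 = n" and c2: "card V2 = n"
    and bip: "\<forall>x\<in>V. \<forall>y\<in>V. E x y \<longrightarrow> (x \<in> V1 \<and> y \<in> V2) \<or> (x \<in> V2 \<and> y \<in> V1)"
    using assms(2) unfolding balanced_bipartite_def V_def by auto
  have finV: "finite V" and sym: "\<forall>x y. E x y \<longrightarrow> E y x" and irr: "\<forall>x. \<not> E x x"
    using sg unfolding simple_graph_def by auto
  have fin1: "finite V1" "finite V2" using finV V_def by auto
  define d where "d = min_degree V E"
  have d2: "n + 2 \<le> 2 * d"
  proof -
    have "real n + 2 \<le> 2 * real d" using assms(3) unfolding d_def V_def by linarith
    hence "real (n + 2) \<le> real (2 * d)" by simp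
    thus ?thesis by linarith
  qed
  have dle: "d \<le> degree V E v" if "v \<in> V" for v
    using that finV unfolding d_def min_degree_def by (intro Min_le) auto
  have SV: "S \<subseteq> V" using assms(4) V_def by simp
  have finS: "finite S" using SV finV finite_subset by blast
  have Sne: "S \<noteq> {}" using assms(5) by auto
  have nc: "\<not> (\<exists>cs. is_cycle S E cs)" using assms(6) unfolding induced_forest_def by simp
  define P where "P = {(x,y). x\<in>S \<and> y\<in>S \<and> E x y}"
  have cP: "card P + 2 \<le> 2 * (n + 1)"
    using forest_edges[OF sym irr finS Sne nc] assms(5) unfolding P_def by simp
  have "P \<subseteq> S \<times> S" unfolding P_def by blast
  hence finP: "finite P" using finS by (meson finite_SigmaI finite_subset)
  define S1 where "S1 = S \<inter> V1"
  define S2 where "S2 = S \<inter> V2"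
  define a where "a = card S1"
  define b where "b = card S2"
  have finS12: "finite S1" "finite S2" using finS by (auto simp: S1_def S2_def)
  have ab: "a + b = n + 1"
  proof -
    have "S = S1 \<union> S2" using SV V_def S1_def S2_def by auto
    hence "card S = a + b" using finS12 dis card_Un_disjoint[of S1 S2]
      unfolding a_def b_def S1_def S2_def by auto
    thus ?thesis using assms(5) by simp
  qed
  have an: "a \<le> n" "b \<le> n" using c1 c2 fin1 card_mono unfolding a_def b_def S1_def S2_def
    by (metis inf_le2)+
  define N where "N x = {u\<in>S. E x u}" for x
  define P1 where "P1 = Sigma S1 N"
  define P2 where "P2 = Sigma S2 N"
  have finN: "finite (N x)" for x using finS by (simp add: N_def)
  have cP1: "card P1 = (\<Sum>x\<in>S1. card (N x))" unfolding P1_def using finS12 finN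
    by (simp add: card_SigmaI)
  have cP2: "card P2 = (\<Sum>x\<in>S2. card (N x))" unfolding P2_def using finS12 finN
    by (simp add: card_SigmaI)
  have P12: "card P1 + card P2 \<le> card P"
  proof -
    have "P1 \<union> P2 \<subseteq> P" "P1 \<inter> P2 = {}" using dis
      by (auto simp: P1_def P2_def P_def N_def S1_def S2_def)
    moreover have "finite P1" "finite P2" using finP calculation(1)
      by (auto intro: finite_subset)
    ultimately show ?thesis using card_Un_disjoint[of P1 P2] card_mono[OF finP]
      by (metis)
  qed
  have sw: "card P1 = card P2"
  proof -
    have sw1: "(\<lambda>(x,y). (y,x)) ` P1 \<subseteq> P2"
    proof
      fix z assume "z \<in> (\<lambda>(x,y). (y,x)) ` P1"
      then obtain x y where z: "z = (y,x)" "x \<in> S1" "y \<in> S" "E x y"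
        by (auto simp: P1_def N_def)
      hence "y \<in> V2" using bip SV dis by (auto simp: S1_def V_def)
      moreover have "E y x" using sym z(4) by blast
      ultimately show "z \<in> P2" using z by (auto simp: P2_def N_def S2_def S1_def)
    qed
    have sw2: "(\<lambda>(x,y). (y,x)) ` P2 \<subseteq> P1"
    proof
      fix z assume "z \<in> (\<lambda>(x,y). (y,x)) ` P2"
      then obtain x y where z: "z = (y,x)" "x \<in> S2" "y \<in> S" "E x y"
        by (auto simp: P2_def N_def)
      hence "y \<in> V1" using bip SV dis by (auto simp: S2_def V_def)
      moreover have "E y x" using sym z(4) by blast
      ultimately show "z \<in> P1" using z by (auto simp: P1_def N_def S2_def S1_def)
    qed
    have inj: "inj_on (\<lambda>(x,y). (y,x)) A" for A :: "('a \<times> 'a) set"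
      by (auto simp: inj_on_def)
    have fP12: "finite P1" "finite P2" using finS12 finN by (auto simp: P1_def P2_def)
    have "card P1 \<le> card P2" using card_mono[OF fP12(2) sw1] card_image[OF inj] by metis
    moreover have "card P2 \<le> card P1" using card_mono[OF fP12(1) sw2] card_image[OF inj] by metis
    ultimately show ?thesis by simp
  qed
  have bound1: "d + b \<le> card (N x) + n" if "x \<in> S1" for x
  proof -
    have xV: "x \<in> V" "x \<in> V1" using that SV by (auto simp: S1_def)
    have "{u\<in>V. E x u} \<subseteq> N x \<union> (V2 - S2)"
      using bip xV dis by (auto simp: N_def S2_def)
    hence "degree V E x \<le> card (N x \<union> (V2 - S2))"
      unfolding degree_def using finN fin1 by (intro card_mono) auto
    also have "\<dots> \<le> card (N x) + card (V2 - S2)" by (rule card_Un_le)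
    also have "card (V2 - S2) = n - b" using c2 fin1 unfolding b_def S2_def
      by (simp add: card_Diff_subset finite_subset)
    finally show ?thesis using dle[OF xV(1)] an by linarith
  qed
  have bound2: "d + a \<le> card (N x) + n" if "x \<in> S2" for x
  proof -
    have xV: "x \<in> V" "x \<in> V2" using that SV by (auto simp: S2_def)
    have "{u\<in>V. E x u} \<subseteq> N x \<union> (V1 - S1)"
      using bip xV dis by (auto simp: N_def S1_def)
    hence "degree V E x \<le> card (N x \<union> (V1 - S1))"
      unfolding degree_def using finN fin1 by (intro card_mono) auto
    also have "\<dots> \<le> card (N x) + card (V1 - S1)" by (rule card_Un_le)
    also have "card (V1 - S1) = n - a" using c1 fin1 unfolding a_def S1_def
      by (simp add: card_Diff_subset finite_subset)
    finally show ?thesis using dle[OF xV(1)] an by linarith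
  qed
  have s1: "a * (d + b - n) \<le> card P1"
  proof -
    have "\<And>i. i \<in> S1 \<Longrightarrow> d + b - n \<le> card (N i)" using bound1 by (simp add: le_diff_conv)
    from sum_bounded_below[of S1 "d + b - n" "\<lambda>x. card (N x)", OF this]
    show ?thesis unfolding cP1 a_def by simp
  qed
  have s2: "b * (d + a - n) \<le> card P2"
  proof -
    have "\<And>i. i \<in> S2 \<Longrightarrow> d + a - n \<le> card (N i)" using bound2 by (simp add: le_diff_conv)
    from sum_bounded_below[of S2 "d + a - n" "\<lambda>x. card (N x)", OF this]
    show ?thesis unfolding cP2 b_def by simp
  qed
  have cPn: "card P1 \<le> n" "card P2 \<le> n" using sw P12 cP by simp_all
  have e1: "a * (d + b - n) \<le> n" using s1 cPn(1) by (rule order_trans)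
  have e2: "b * (d + a - n) \<le> n" using s2 cPn(2) by (rule order_trans)
  have a1: "1 \<le> a" "1 \<le> b" using an ab by auto
  have "min a b = 1 \<or> min a b = 2 \<or> 2 * min a b = n"
  proof (cases "a \<le> b")
    case True
    thus ?thesis using arith1[OF ab d2 True a1(1) e1] by (simp add: min_def)
  next
    case False
    have ba: "b + a = n + 1" using ab by simp
    have "b \<le> a" using False by simp
    from arith1[OF ba d2 this a1(2) e2] show ?thesis using False by (simp add: min_def)
  qed
  hence "real (min a b) = 1 \<or> real (min a b) = 2 \<or> real (min a b) = real n / 2"
    by (auto simp del: of_nat_min)
  thus ?thesis unfolding a_def b_def S1_def S2_def by auto
qed

end
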